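(* In the full-observability model (see context), fix $m$, $\lambda,\gamma>0$, the $p_I(k,\mathcal{T})$, $u\ge m\max\{\lambda,\gamma\}$, assume $\mathbf{P}^{0}$ irreducible with stationary distribution $\boldsymbol{\pi}^{0}$, and let $\tau_\eta\in\mathbb{R}$. Fix $\hat{\mathbf{p}}=(\hat p_R,\hat p_J)\in(0,1]^2$ at which $\mathbf{P}^{1}(\hat{\mathbf{p}})$ is irreducible, let $\boldsymbol{\pi}^{1}(\mathbf{p})$ denote the (row-vector) stationary distribution of $\mathbf{P}^{1}(\mathbf{p})$ and $\mathbf{J}(\hat{\mathbf{p}})\in\mathbb{R}^{2\times 2^m}$ its Jacobian with respect to $\mathbf{p}=(p_R,p_J)$ at $\hat{\mathbf{p}}$, and define the first-order approximation $\boldsymbol{\pi}^{1}_{\rm ts}(\mathbf{p})=\boldsymbol{\pi}^{1}(\hat{\mathbf{p}})+(\mathbf{p}-\hat{\mathbf{p}})\mathbf{J}(\hat{\mathbf{p}})$. Let $\mathbf{t}\in\{0,1\}^{2^m}$ be the indicator vector of the collision states $\mathcal{S}_3=\{\mathcal{T}\in\mathcal{S}:1\in\mathcal{T},|\mathcal{T}|>1\}$. Then the optimization problem $$\min_{\mathbf{p}\in[0,1]^2} I(p_R,p_J)\quad\text{subject to}\quad \boldsymbol{\pi}^{1}_{\rm ts}(\mathbf{p})\,\mathbf{t}\ge\tau_\eta\,\boldsymbol{\pi}^{0}\mathbf{t}$$ is a convex optimization problem (convex objective over a convex feasible set).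
   Context: Full-observability model: $m$ stations indexed by $[m]$; station 1 is the station under test. State space $\mathcal{S}$ = all subsets $\mathcal{T}\subseteq[m]$. Given $p_I(k,\mathcal{T})\in[0,1]$ for $k\notin\mathcal{T}$. Rate matrix $\mathbf{Q}^{0}$: $q^{0}_{\mathcal{T},\mathcal{T}\cup\{k\}}=\lambda p_I(k,\mathcal{T})$ ($k\notin\mathcal{T}$), $q^{0}_{\mathcal{T},\mathcal{T}\setminus\{k\}}=\gamma$ ($k\in\mathcal{T}$), other off-diagonals $0$, rows summing to $0$. $\mathbf{Q}^{1}(p_R,p_J)$ equals $\mathbf{Q}^{0}$ except $q^{1}_{\mathcal{T},\mathcal{T}\cup\{1\}}=\lambda(p_R p_I(1,\mathcal{T})+p_J(1-p_I(1,\mathcal{T})))$ for $1\notin\mathcal{T}$ (rows summing to $0$). $\mathbf{P}^{b}=\mathbf{I}+\mathbf{Q}^{b}/u$ with entries $p^{b}_{i,j}$. The objective is $I(p_R,p_J)=\sum_{i,j}\pi^{0}_i p^{0}_{i,j}\ln(p^{0}_{i,j}/p^{1}_{i,j}(p_R,p_J))$ with $0\ln(0/q)=0$, $p\ln(p/0)=+\infty$ for $p>0$. *)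

theory Defs
  imports "HOL-Analysis.Analysis"
begin

text \<open>States: subsets of the station set {1..m}; vectors are functions on states,
  matrices are functions of two states; everything is restricted to the finite
  state space explicitly.\<close>

definition states :: "nat \<Rightarrow> nat set set" where
  "states m = Pow {1..m}"

definition q0_off :: "nat \<Rightarrow> real \<Rightarrow> real \<Rightarrow> (nat \<Rightarrow> nat set \<Rightarrow> real)
    \<Rightarrow> nat set \<Rightarrow> nat set \<Rightarrow> real" where
  "q0_off m lam gam pI T T' =
     (if \<exists>k\<in>{1..m}. k \<notin> T \<and> T' = insert k T then lam * pI (the_elem (T' - T)) T
      else if \<exists>k\<in>T. T' = T - {k} then gam
      else 0)"

definition q1_off :: "nat \<Rightarrow> real \<Rightarrow> real \<Rightarrow> (nat \<Rightarrow> nat set \<Rightarrow> real)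
    \<Rightarrow> real \<times> real \<Rightarrow> nat set \<Rightarrow> nat set \<Rightarrow> real" where
  "q1_off m lam gam pI p T T' =
     (if 1 \<notin> T \<and> T' = insert 1 T
      then lam * (fst p * pI 1 T + snd p * (1 - pI 1 T))
      else q0_off m lam gam pI T T')"

definition rate_matrix :: "nat set set \<Rightarrow> (nat set \<Rightarrow> nat set \<Rightarrow> real)
    \<Rightarrow> nat set \<Rightarrow> nat set \<Rightarrow> real" where
  "rate_matrix S off T T' =
     (if T = T' then - (\<Sum>T''\<in>S - {T}. off T T'') else off T T')"

definition unif :: "real \<Rightarrow> (nat set \<Rightarrow> nat set \<Rightarrow> real) \<Rightarrow> nat set \<Rightarrow> nat set \<Rightarrow> real" where
  "unif u Q T T' = (if T = T' then 1 else 0) + Q T T' / u"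

definition P0 :: "nat \<Rightarrow> real \<Rightarrow> real \<Rightarrow> (nat \<Rightarrow> nat set \<Rightarrow> real) \<Rightarrow> real
    \<Rightarrow> nat set \<Rightarrow> nat set \<Rightarrow> real" where
  "P0 m lam gam pI u = unif u (rate_matrix (states m) (q0_off m lam gam pI))"

definition P1 :: "nat \<Rightarrow> real \<Rightarrow> real \<Rightarrow> (nat \<Rightarrow> nat set \<Rightarrow> real) \<Rightarrow> real
    \<Rightarrow> real \<times> real \<Rightarrow> nat set \<Rightarrow> nat set \<Rightarrow> real" where
  "P1 m lam gam pI u p = unif u (rate_matrix (states m) (q1_off m lam gam pI p))"

fun mpow :: "nat set set \<Rightarrow> (nat set \<Rightarrow> nat set \<Rightarrow> real) \<Rightarrow> nat
    \<Rightarrow> nat set \<Rightarrow> nat set \<Rightarrow> real" where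
  "mpow S P 0 = (\<lambda>i j. if i = j then 1 else 0)"
| "mpow S P (Suc n) = (\<lambda>i j. \<Sum>k\<in>S. mpow S P n i k * P k j)"

definition irreducible_chain :: "nat set set \<Rightarrow> (nat set \<Rightarrow> nat set \<Rightarrow> real) \<Rightarrow> bool" where
  "irreducible_chain S P \<longleftrightarrow> (\<forall>i\<in>S. \<forall>j\<in>S. \<exists>n. mpow S P n i j > 0)"

definition is_stationary :: "nat set set \<Rightarrow> (nat set \<Rightarrow> nat set \<Rightarrow> real)
    \<Rightarrow> (nat set \<Rightarrow> real) \<Rightarrow> bool" where
  "is_stationary S P \<pi> \<longleftrightarrow>
     (\<forall>i\<in>S. \<pi> i \<ge> 0) \<and> (\<Sum>i\<in>S. \<pi> i) = 1 \<and>
     (\<forall>j\<in>S. (\<Sum>i\<in>S. \<pi> i * P i j) = \<pi> j) \<and> (\<forall>i. i \<notin> S \<longrightarrow> \<pi> i = 0)"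

text \<open>The (unique, for irreducible chains) stationary distribution.\<close>
definition stat_dist :: "nat set set \<Rightarrow> (nat set \<Rightarrow> nat set \<Rightarrow> real) \<Rightarrow> nat set \<Rightarrow> real" where
  "stat_dist S P = (THE \<pi>. is_stationary S P \<pi>)"

text \<open>First-order (Taylor) approximation of p |-> pi^1(p) around (pRh,pJh):
  pi^1(ph) + (p - ph) J(ph), the Jacobian rows being the partial derivatives
  with respect to pR and pJ.\<close>
definition pi1_ts :: "nat \<Rightarrow> real \<Rightarrow> real \<Rightarrow> (nat \<Rightarrow> nat set \<Rightarrow> real) \<Rightarrow> real
    \<Rightarrow> real \<times> real \<Rightarrow> real \<times> real \<Rightarrow> nat set \<Rightarrow> real" where
  "pi1_ts m lam gam pI u ph p T =
     (let \<pi>1 = (\<lambda>q. stat_dist (states m) (P1 m lam gam pI u q)) in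
      \<pi>1 ph T
      + (fst p - fst ph) * deriv (\<lambda>x. \<pi>1 (x, snd ph) T) (fst ph)
      + (snd p - snd ph) * deriv (\<lambda>y. \<pi>1 (fst ph, y) T) (snd ph))"

definition kl_term :: "real \<Rightarrow> real \<Rightarrow> ereal" where
  "kl_term a b = (if a = 0 then 0 else if b = 0 then \<infinity> else ereal (a * ln (a / b)))"

definition objI :: "nat \<Rightarrow> real \<Rightarrow> real \<Rightarrow> (nat \<Rightarrow> nat set \<Rightarrow> real) \<Rightarrow> real
    \<Rightarrow> (nat set \<Rightarrow> real) \<Rightarrow> real \<times> real \<Rightarrow> ereal" where
  "objI m lam gam pI u \<pi>0 p =
     (\<Sum>i\<in>states m. \<Sum>j\<in>states m.
        ereal (\<pi>0 i) * kl_term (P0 m lam gam pI u i j) (P1 m lam gam pI u p i j))"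

definition collision_states :: "nat \<Rightarrow> nat set set" where
  "collision_states m = {T \<in> states m. 1 \<in> T \<and> card T > 1}"

definition ereal_convex_on :: "(real \<times> real) set \<Rightarrow> (real \<times> real \<Rightarrow> ereal) \<Rightarrow> bool" where
  "ereal_convex_on D f \<longleftrightarrow> convex D \<and>
     (\<forall>x\<in>D. \<forall>y\<in>D. \<forall>t::real. 0 \<le> t \<and> t \<le> 1 \<longrightarrow>
        f ((1 - t) *\<^sub>R x + t *\<^sub>R y) \<le> ereal (1 - t) * f x + ereal t * f y)"

end

theory Submission
  imports Defs
begin


lemma sum_cvx:
  fixes f :: "'a \<Rightarrow> 'b \<Rightarrow> ereal"
  assumes "0 \<le> t" "t \<le> 1" "\<And>i. i \<in> A \<Longrightarrow> f i z \<le> ereal (1-t) * f i x + ereal t * f i y"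
  shows "(\<Sum>i\<in>A. f i z) \<le> ereal (1-t) * (\<Sum>i\<in>A. f i x) + ereal t * (\<Sum>i\<in>A. f i y)"
proof -
  have "(\<Sum>i\<in>A. f i z) \<le> (\<Sum>i\<in>A. ereal (1-t) * f i x + ereal t * f i y)"
    by (rule sum_mono) (use assms in auto)
  also have "\<dots> = (\<Sum>i\<in>A. f i x * ereal (1-t)) + (\<Sum>i\<in>A. f i y * ereal t)"
    by (simp add: sum.distrib mult.commute)
  also have "\<dots> = ereal (1-t) * (\<Sum>i\<in>A. f i x) + ereal t * (\<Sum>i\<in>A. f i y)"
  proof -
    have "(\<Sum>i\<in>A. f i x * ereal (1-t)) = ereal (1-t) * (\<Sum>i\<in>A. f i x)"
      using sum_distrib_right_ereal[of "1-t" "\<lambda>i. f i x" A] assms by (simp add: mult.commute)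
    moreover have "(\<Sum>i\<in>A. f i y * ereal t) = ereal t * (\<Sum>i\<in>A. f i y)"
      using sum_distrib_right_ereal[of "t" "\<lambda>i. f i y" A] assms by (simp add: mult.commute)
    ultimately show ?thesis by simp
  qed
  finally show ?thesis .
qed

lemma kl_cvx:
  fixes a b0 b1 c t :: real
  assumes "0 \<le> c" "0 \<le> a" "0 \<le> b0" "0 \<le> b1" "0 \<le> t" "t \<le> 1"
  shows "ereal c * kl_term a ((1-t)*b0 + t*b1)
     \<le> ereal (1-t) * (ereal c * kl_term a b0) + ereal t * (ereal c * kl_term a b1)"
proof -
  consider "c = 0" | "a = 0" | "t = 0" | "t = 1" | "c > 0" "a > 0" "0 < t" "t < 1"
    using assms by linarith
  then show ?thesis
  proof cases
    case 5
    show ?thesis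
    proof (cases "b0 = 0 \<or> b1 = 0")
      case True
      have fin: "ereal c * kl_term a b \<noteq> -\<infinity>" for b
        using 5 by (auto simp: kl_term_def)
      have inf: "ereal c * kl_term a 0 = \<infinity>" using 5 by (simp add: kl_term_def)
      have eqinf: "ereal (1-t) * (ereal c * kl_term a b0) + ereal t * (ereal c * kl_term a b1) = \<infinity>"
      proof (cases "b0 = 0")
        case True
        have "ereal (1-t) * (ereal c * kl_term a b0) = \<infinity>" using True inf 5 by simp
        moreover have "ereal t * (ereal c * kl_term a b1) \<noteq> -\<infinity>" using fin[of b1] 5
          by (cases "ereal c * kl_term a b1") auto
        ultimately show ?thesis by simp
      next
        case False
        then have "b1 = 0" using \<open>b0 = 0 \<or> b1 = 0\<close> by simp
        have "ereal t * (ereal c * kl_term a b1) = \<infinity>" using \<open>b1 = 0\<close> inf 5 by simp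
        moreover have "ereal (1-t) * (ereal c * kl_term a b0) \<noteq> -\<infinity>" using fin[of b0] 5
          by (cases "ereal c * kl_term a b0") auto
        ultimately show ?thesis by simp
      qed
      show ?thesis by (simp only: eqinf) simp
    next
      case False
      then have p: "b0 > 0" "b1 > 0" using assms by auto
      have bt: "(1-t)*b0 + t*b1 > 0" using p 5
        by (smt (verit) mult_pos_pos)
      have conc: "(1-t) * ln b0 + t * ln b1 \<le> ln ((1-t)*b0 + t*b1)"
        using ln_concave p 5 by (simp add: concave_on_iff)
      have "c * (a * ln (a / ((1-t)*b0 + t*b1))) \<le> (1-t) * (c * (a * ln (a / b0))) + t * (c * (a * ln (a / b1)))"
      proof -
        have e: "ln (a / b) = ln a - ln b" if "b > 0" for b using that 5 by (simp add: ln_div)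
        have "c*a \<ge> 0" using 5 by simp
        from mult_left_mono[OF conc this]
        show ?thesis using p bt by (simp add: e algebra_simps)
      qed
      then show ?thesis using 5 p bt by (simp add: kl_term_def)
    qed
  qed (auto simp: kl_term_def)
qed



lemma q0_bounds:
  assumes pI_range: "\<And>k T. T \<subseteq> {1..m} \<Longrightarrow> k \<in> {1..m} \<Longrightarrow> k \<notin> T \<Longrightarrow> 0 \<le> pI k T \<and> pI k T \<le> 1"
    and "lam > 0" "gam > 0" "T \<subseteq> {1..m}"
  shows "0 \<le> q0_off m lam gam pI T T' \<and>
         q0_off m lam gam pI T T' \<le> max lam gam * (if T' \<in> (\<lambda>k. if k \<in> T then T - {k} else insert k T) ` {1..m} then 1 else 0)"
proof (cases "\<exists>k\<in>{1..m}. k \<notin> T \<and> T' = insert k T")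
  case True
  then obtain k where k: "k \<in> {1..m}" "k \<notin> T" "T' = insert k T" by blast
  have "T' - T = {k}" using k by auto
  then have "q0_off m lam gam pI T T' = lam * pI k T" using True by (simp add: q0_off_def)
  moreover have "T' \<in> (\<lambda>k. if k \<in> T then T - {k} else insert k T) ` {1..m}"
    using k by (intro image_eqI[of _ _ k]) auto
  moreover have "0 \<le> pI k T" "pI k T \<le> 1" using pI_range[OF assms(4) k(1) k(2)] by auto
  ultimately show ?thesis using assms
    by (simp add: mult_le_cancel_left1 max.coboundedI1)
next
  case False
  note F = False
  show ?thesis
  proof (cases "\<exists>k\<in>T. T' = T - {k}")
    case True
    then obtain k where k: "k \<in> T" "T' = T - {k}" by blast
    have "T' \<in> (\<lambda>k. if k \<in> T then T - {k} else insert k T) ` {1..m}"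
      using k assms(4) by (intro image_eqI[of _ _ k]) auto
    moreover have "q0_off m lam gam pI T T' = gam" unfolding q0_off_def by (simp only: if_not_P[OF F] if_P[OF True])
    ultimately show ?thesis using assms by simp
  next
    case False
    have "q0_off m lam gam pI T T' = 0" unfolding q0_off_def by (simp only: if_not_P[OF F] if_not_P[OF False])
    then show ?thesis using assms by simp
  qed
qed

lemma q1_bounds:
  assumes pI_range: "\<And>k T. T \<subseteq> {1..m} \<Longrightarrow> k \<in> {1..m} \<Longrightarrow> k \<notin> T \<Longrightarrow> 0 \<le> pI k T \<and> pI k T \<le> 1"
    and "lam > 0" "gam > 0" "T \<subseteq> {1..m}" "m \<ge> 1"
    and "p \<in> {0..1} \<times> {0..1}"
  shows "0 \<le> q1_off m lam gam pI p T T' \<and>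
         q1_off m lam gam pI p T T' \<le> max lam gam * (if T' \<in> (\<lambda>k. if k \<in> T then T - {k} else insert k T) ` {1..m} then 1 else 0)"
proof (cases "1 \<notin> T \<and> T' = insert 1 T")
  case True
  obtain a b where ab: "p = (a,b)" "0 \<le> a" "a \<le> 1" "0 \<le> b" "b \<le> 1" using assms(6) by auto
  have pi: "0 \<le> pI 1 T" "pI 1 T \<le> 1" using pI_range[OF assms(4), of 1] True assms(5) by auto
  have c0: "0 \<le> a * pI 1 T + b * (1 - pI 1 T)" using ab pi by simp
  have c1: "a * pI 1 T + b * (1 - pI 1 T) \<le> 1"
  proof -
    have "a * pI 1 T + b * (1 - pI 1 T) \<le> 1 * pI 1 T + 1 * (1 - pI 1 T)"
      using ab pi by (intro add_mono mult_right_mono) auto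
    then show ?thesis by simp
  qed
  have mem: "T' \<in> (\<lambda>k. if k \<in> T then T - {k} else insert k T) ` {1..m}"
    using True assms(5) by (intro image_eqI[of _ _ 1]) auto
  have "lam * (a * pI 1 T + b * (1 - pI 1 T)) \<le> lam * 1"
    using c1 assms(2) by (intro mult_left_mono) auto
  also have "\<dots> \<le> max lam gam" by simp
  finally show ?thesis using True ab c0 mem assms(2) by (simp add: q1_off_def)
next
  case False
  then have "q1_off m lam gam pI p T T' = q0_off m lam gam pI T T'" by (simp only: q1_off_def if_not_P[OF False] if_False)
  then show ?thesis using q0_bounds[of m pI lam gam T T', OF assms(1-4)] by simp
qed

lemma rate_sum_le:
  assumes "\<And>T'. 0 \<le> off T T' \<and> off T T' \<le> M * (if T' \<in> N then 1 else 0)"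
    and "finite S" "finite N" "card N \<le> m" "M \<ge> 0"
  shows "(\<Sum>T''\<in>S - {T}. off T T'') \<le> M * real m"
proof -
  have "(\<Sum>T''\<in>S - {T}. off T T'') \<le> (\<Sum>T''\<in>S - {T}. M * (if T'' \<in> N then 1 else 0))"
    using assms(1) by (intro sum_mono) auto
  also have "\<dots> = M * real (card ((S - {T}) \<inter> N))"
    using assms(2) by (simp add: sum_distrib_left[symmetric] sum.If_cases)
  also have "\<dots> \<le> M * real m"
  proof -
    have "card ((S - {T}) \<inter> N) \<le> card N" using assms(3) by (intro card_mono) auto
    then show ?thesis using assms(4,5) by (intro mult_left_mono) auto
  qed
  finally show ?thesis .
qed



lemma q1_affine:
  "q1_off m lam gam pI ((1-t) *\<^sub>R x + t *\<^sub>R y) T T' =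
   (1-t) * q1_off m lam gam pI x T T' + t * q1_off m lam gam pI y T T'"
  by (simp add: q1_off_def algebra_simps)

lemma P1_affine:
  "P1 m lam gam pI u ((1-t) *\<^sub>R x + t *\<^sub>R y) i j =
   (1-t) * P1 m lam gam pI u x i j + t * P1 m lam gam pI u y i j"
proof -
  have s: "(\<Sum>T''\<in>A. (1-t) * f T'' + t * g T'') = (1-t) * (\<Sum>T''\<in>A. f T'') + t * (\<Sum>T''\<in>A. g T'')"
    for A and f g :: "nat set \<Rightarrow> real"
    by (simp add: sum.distrib sum_distrib_left)
  show ?thesis
    by (simp only: P1_def unif_def rate_matrix_def q1_affine s)
      (cases "u = 0"; simp add: field_simps)
qed

lemma q0_eq_q1:
  assumes "m \<ge> 1"
  shows "q0_off m lam gam pI T T' = q1_off m lam gam pI (1,0) T T'"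
proof (cases "1 \<notin> T \<and> T' = insert 1 T")
  case True
  have "insert 1 T - T = {1}" using True by auto
  moreover have "\<exists>k\<in>{1..m}. k \<notin> T \<and> T' = insert k T" using True assms by auto
  ultimately show ?thesis using True by (simp add: q0_off_def q1_off_def)
next
  case False
  then show ?thesis by (simp only: q1_off_def if_not_P[OF False] if_False)
qed

lemma P0_eq_P1:
  assumes "m \<ge> 1"
  shows "P0 m lam gam pI u = P1 m lam gam pI u (1,0)"
proof -
  have "q0_off m lam gam pI = q1_off m lam gam pI (1,0)"
    using q0_eq_q1[OF assms] by (intro ext) auto
  then show ?thesis by (simp add: P0_def P1_def)
qed

lemma P1_nonneg:
  assumes pI_range: "\<And>k T. T \<subseteq> {1..m} \<Longrightarrow> k \<in> {1..m} \<Longrightarrow> k \<notin> T \<Longrightarrow> 0 \<le> pI k T \<and> pI k T \<le> 1"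
    and "lam > 0" "gam > 0" "m \<ge> 1" "u \<ge> real m * max lam gam"
    and "p \<in> {0..1} \<times> {0..1}" "i \<in> states m"
  shows "0 \<le> P1 m lam gam pI u p i j"
proof -
  have iT: "i \<subseteq> {1..m}" using assms(7) by (simp add: states_def)
  have upos: "u > 0"
  proof -
    have "real m * max lam gam > 0" using assms(2-4) by simp
    then show ?thesis using assms(5) by linarith
  qed
  let ?N = "(\<lambda>k. if k \<in> i then i - {k} else insert k i) ` {1..m}"
  note qb = q1_bounds[OF assms(1-3) iT assms(4,6)]
  show ?thesis
  proof (cases "i = j")
    case False
    then show ?thesis using qb[where T'=j] upos by (simp add: P1_def unif_def rate_matrix_def)
  next
    case True
    have "card ?N \<le> m" using card_image_le[of "{1..m}" "\<lambda>k. if k \<in> i then i - {k} else insert k i"]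
      by (simp only: finite_atLeastAtMost card_atLeastAtMost) simp
    have "(\<Sum>T''\<in>states m - {i}. q1_off m lam gam pI p i T'') \<le> max lam gam * real m"
      by (rule rate_sum_le[where N="?N"]) (use qb \<open>card ?N \<le> m\<close> assms(2) in \<open>auto simp: states_def\<close>)
    also have "\<dots> \<le> u" using assms(5) by (simp add: mult.commute)
    finally have "(\<Sum>T''\<in>states m - {i}. q1_off m lam gam pI p i T'') / u \<le> 1"
      using upos by simp
    then show ?thesis using True by (simp add: P1_def unif_def rate_matrix_def)
  qed
qed



theorem theorem1:
  fixes m :: nat and lam gam u tau :: real
    and pI :: "nat \<Rightarrow> nat set \<Rightarrow> real"
    and \<pi>0 :: "nat set \<Rightarrow> real"
    and pRh pJh :: real
  assumes m_pos: "m \<ge> 1"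
    and lam_pos: "lam > 0" and gam_pos: "gam > 0"
    and pI_range: "\<And>k T. T \<subseteq> {1..m} \<Longrightarrow> k \<in> {1..m} \<Longrightarrow> k \<notin> T \<Longrightarrow> 0 \<le> pI k T \<and> pI k T \<le> 1"
    and u_ge: "u \<ge> real m * max lam gam"
    and P0_irr: "irreducible_chain (states m) (P0 m lam gam pI u)"
    and pi0_stat: "is_stationary (states m) (P0 m lam gam pI u) \<pi>0"
    and hat_range: "0 < pRh" "pRh \<le> 1" "0 < pJh" "pJh \<le> 1"
    and P1_irr: "irreducible_chain (states m) (P1 m lam gam pI u (pRh, pJh))"
  defines "F \<equiv> {p \<in> {0..1} \<times> {0..1}.
              (\<Sum>T\<in>collision_states m. pi1_ts m lam gam pI u (pRh, pJh) p T)
                \<ge> tau * (\<Sum>T\<in>collision_states m. \<pi>0 T)}"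
  shows "convex F \<and> ereal_convex_on ({0..1} \<times> {0..1}) (objI m lam gam pI u \<pi>0)"
  
proof -
  have box: "convex ({0..1::real} \<times> {0..1::real})"
    by (intro convex_Times convex_real_interval)
  have aff: "pi1_ts m lam gam pI u (pRh, pJh) (a *\<^sub>R x + b *\<^sub>R y) T =
      a * pi1_ts m lam gam pI u (pRh, pJh) x T + b * pi1_ts m lam gam pI u (pRh, pJh) y T"
    if "a + b = 1" for a b :: real and x y T
  proof -
    have b: "b = 1 - a" using that by simp
    show ?thesis unfolding pi1_ts_def Let_def b by (simp add: algebra_simps)
  qed
  have cF: "convex F"
    unfolding convex_def
  proof (intro ballI allI impI)
    fix x y and a b :: real
    assume xF: "x \<in> F" and yF: "y \<in> F" and ab: "0 \<le> a" "0 \<le> b" "a + b = 1"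
    let ?g = "\<lambda>p. \<Sum>T\<in>collision_states m. pi1_ts m lam gam pI u (pRh, pJh) p T"
    let ?c = "tau * (\<Sum>T\<in>collision_states m. \<pi>0 T)"
    have inbox: "a *\<^sub>R x + b *\<^sub>R y \<in> {0..1} \<times> {0..1}"
      using box xF yF ab unfolding F_def convex_def by blast
    have "?g (a *\<^sub>R x + b *\<^sub>R y) = a * ?g x + b * ?g y"
      by (simp add: aff[OF ab(3)] sum.distrib sum_distrib_left)
    also have "\<dots> \<ge> a * ?c + b * ?c"
      using xF yF ab by (intro add_mono mult_left_mono) (auto simp: F_def)
    finally have "?g (a *\<^sub>R x + b *\<^sub>R y) \<ge> ?c" using ab(3)
      by (metis distrib_right mult_1)
    then show "a *\<^sub>R x + b *\<^sub>R y \<in> F" using inbox unfolding F_def by blast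
  qed
  have cO: "ereal_convex_on ({0..1} \<times> {0..1}) (objI m lam gam pI u \<pi>0)"
    unfolding ereal_convex_on_def
  proof (intro conjI box ballI allI impI)
    fix x y and t :: real
    assume x: "x \<in> {0..1::real} \<times> {0..1::real}" and y: "y \<in> {0..1::real} \<times> {0..1::real}"
      and t: "0 \<le> t \<and> t \<le> 1"
    have p10: "(1::real, 0::real) \<in> {0..1} \<times> {0..1}" by simp
    show "objI m lam gam pI u \<pi>0 ((1 - t) *\<^sub>R x + t *\<^sub>R y)
        \<le> ereal (1 - t) * objI m lam gam pI u \<pi>0 x + ereal t * objI m lam gam pI u \<pi>0 y"
      unfolding objI_def
    proof (rule sum_cvx)
      fix i assume i: "i \<in> states m"
      show "(\<Sum>j\<in>states m. ereal (\<pi>0 i) * kl_term (P0 m lam gam pI u i j)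
                (P1 m lam gam pI u ((1 - t) *\<^sub>R x + t *\<^sub>R y) i j))
         \<le> ereal (1 - t) * (\<Sum>j\<in>states m. ereal (\<pi>0 i) * kl_term (P0 m lam gam pI u i j) (P1 m lam gam pI u x i j))
           + ereal t * (\<Sum>j\<in>states m. ereal (\<pi>0 i) * kl_term (P0 m lam gam pI u i j) (P1 m lam gam pI u y i j))"
      proof (rule sum_cvx)
        fix j assume j: "j \<in> states m"
        have c: "0 \<le> \<pi>0 i" using pi0_stat i by (simp add: is_stationary_def)
        have a: "0 \<le> P0 m lam gam pI u i j"
          unfolding P0_eq_P1[OF m_pos]
          by (rule P1_nonneg[OF pI_range lam_pos gam_pos m_pos u_ge p10 i])
        have b0: "0 \<le> P1 m lam gam pI u x i j"
          by (rule P1_nonneg[OF pI_range lam_pos gam_pos m_pos u_ge x i])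
        have b1: "0 \<le> P1 m lam gam pI u y i j"
          by (rule P1_nonneg[OF pI_range lam_pos gam_pos m_pos u_ge y i])
        show "ereal (\<pi>0 i) * kl_term (P0 m lam gam pI u i j) (P1 m lam gam pI u ((1 - t) *\<^sub>R x + t *\<^sub>R y) i j)
          \<le> ereal (1 - t) * (ereal (\<pi>0 i) * kl_term (P0 m lam gam pI u i j) (P1 m lam gam pI u x i j))
            + ereal t * (ereal (\<pi>0 i) * kl_term (P0 m lam gam pI u i j) (P1 m lam gam pI u y i j))"
          unfolding P1_affine using kl_cvx[OF c a b0 b1] t by blast
      qed (use t in auto)
    qed (use t in auto)
  qed
  show ?thesis using cF cO by blast
qed

end
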